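(* $G$ contains an edge $uv$ such that $u \notin Z$ and $v \notin Z$.
   Context: $(G,k,t,T_1,T_2)$ is an instance of the Cheap Coloring Extension problem ($G$ bipartite, $T_1,T_2$ disjoint vertex sets with $|T_1|+|T_2|\le t$). A set $X\subseteq V(G)$ is well-connected if for all $X_1,X_2\subseteq X$ with $|X_1|=|X_2|\le |X|/2$ there are $|X_1|$ vertex-disjoint paths in $G$ with one endpoint in $X_1$ and the other in $X_2$; $Y$ is a well-connected set in $G$ of size at least $2(4k^2)\, t\, 4^{4k^2}+2$. Let $G^*$ be obtained from $G$ by adding a new vertex $y^*$ adjacent to all vertices of $Y$. For vertices $x,y$, a set $X$ is $(x,y)$-important if $x\in X$, $y\notin X$, $G^*[X]$ is connected, and there is no $X'\supset X$ with $y\notin X'$, $G^*[X']$ connected and $d_{G^*}(X')\le d_{G^*}(X)$, where $d_{G^*}(X)$ is the number of edges of $G^*$ with exactly one endpoint in $X$. $Z$ is the union of all $(x,y^* )$-important sets $X$ in $G^*$ with $d_{G^*}(X)\le 4k^2$, over all $x\in T_1\cup T_2$. *)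

theory Defs
  imports Main
begin

definition simple_graph :: "'a set \<Rightarrow> 'a set set \<Rightarrow> bool" where
  "simple_graph V E \<longleftrightarrow> finite V \<and> (\<forall>e\<in>E. e \<subseteq> V \<and> card e = 2)"

definition bipartite :: "'a set \<Rightarrow> 'a set set \<Rightarrow> bool" where
  "bipartite V E \<longleftrightarrow> (\<exists>A B. A \<union> B = V \<and> A \<inter> B = {} \<and>
      (\<forall>e\<in>E. card (e \<inter> A) = 1 \<and> card (e \<inter> B) = 1))"

definition is_path :: "'a set \<Rightarrow> 'a set set \<Rightarrow> 'a list \<Rightarrow> bool" where
  "is_path V E p \<longleftrightarrow> p \<noteq> [] \<and> distinct p \<and> set p \<subseteq> V \<and>
      (\<forall>i. Suc i < length p \<longrightarrow> {p ! i, p ! Suc i} \<in> E)"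

definition well_connected :: "'a set \<Rightarrow> 'a set set \<Rightarrow> 'a set \<Rightarrow> bool" where
  "well_connected V E X \<longleftrightarrow>
     (\<forall>X1 X2. X1 \<subseteq> X \<and> X2 \<subseteq> X \<and> card X1 = card X2 \<and> 2 * card X1 \<le> card X \<longrightarrow>
        (\<exists>P. finite P \<and> card P = card X1 \<and>
             (\<forall>p\<in>P. is_path V E p \<and> hd p \<in> X1 \<and> last p \<in> X2) \<and>
             (\<forall>p\<in>P. \<forall>q\<in>P. p \<noteq> q \<longrightarrow> set p \<inter> set q = {})))"

definition induced_connected :: "'a set \<Rightarrow> 'a set set \<Rightarrow> 'a set \<Rightarrow> bool" where
  "induced_connected V E X \<longleftrightarrow> X \<noteq> {} \<and> X \<subseteq> V \<and>
     (\<forall>u\<in>X. \<forall>v\<in>X. \<exists>p. is_path X {e\<in>E. e \<subseteq> X} p \<and> hd p = u \<and> last p = v)"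

definition boundary_deg :: "'a set set \<Rightarrow> 'a set \<Rightarrow> nat" where
  "boundary_deg E X = card {e\<in>E. card (e \<inter> X) = 1}"

definition important :: "'a set \<Rightarrow> 'a set set \<Rightarrow> 'a \<Rightarrow> 'a \<Rightarrow> 'a set \<Rightarrow> bool" where
  "important V E x y X \<longleftrightarrow> x \<in> X \<and> y \<notin> X \<and> induced_connected V E X \<and>
     \<not> (\<exists>X'. X \<subset> X' \<and> y \<notin> X' \<and> induced_connected V E X' \<and>
              boundary_deg E X' \<le> boundary_deg E X)"

definition star_V :: "'a set \<Rightarrow> 'a \<Rightarrow> 'a set" where
  "star_V V ys = insert ys V"

definition star_E :: "'a set set \<Rightarrow> 'a set \<Rightarrow> 'a \<Rightarrow> 'a set set" where
  "star_E E Y ys = E \<union> {{ys, y} | y. y \<in> Y}"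

definition Zset :: "'a set \<Rightarrow> 'a set set \<Rightarrow> 'a set \<Rightarrow> 'a \<Rightarrow> 'a set \<Rightarrow> 'a set \<Rightarrow> nat \<Rightarrow> 'a set" where
  "Zset V E Y ys T1 T2 k = \<Union>{X. \<exists>x\<in>T1 \<union> T2.
       important (star_V V ys) (star_E E Y ys) x ys X \<and>
       boundary_deg (star_E E Y ys) X \<le> 4 * k^2}"

end

theory Submission
  imports Defs
begin


definition adj :: "'a set set \<Rightarrow> 'a set \<Rightarrow> ('a \<times> 'a) set" where
  "adj E X = {(a,b). {a,b} \<in> E \<and> a \<in> X \<and> b \<in> X}"

definition conn :: "'a set \<Rightarrow> 'a set set \<Rightarrow> 'a set \<Rightarrow> bool" where
  "conn V E X \<longleftrightarrow> X \<noteq> {} \<and> X \<subseteq> V \<and> (\<forall>u\<in>X. \<forall>v\<in>X. (u,v) \<in> (adj E X)\<^sup>*)"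

lemma adj_sym: "(a,b) \<in> adj E X \<Longrightarrow> (b,a) \<in> adj E X"
  by (auto simp: adj_def insert_commute)

lemma rtr_sym: "(a,b) \<in> (adj E X)\<^sup>* \<Longrightarrow> (b,a) \<in> (adj E X)\<^sup>*"
proof (induction rule: rtrancl_induct)
  case (step y z)
  show ?case using converse_rtrancl_into_rtrancl[OF adj_sym[OF step(2)] step(3)] .
qed simp

lemma rtr_in: "(a,b) \<in> (adj E X)\<^sup>* \<Longrightarrow> a \<in> X \<Longrightarrow> b \<in> X"
  by (induction rule: rtrancl_induct) (auto simp: adj_def)

lemma adj_mono: "X \<subseteq> Y \<Longrightarrow> E \<subseteq> E' \<Longrightarrow> adj E X \<subseteq> adj E' Y"
  by (auto simp: adj_def)

lemma rtr_mono: "X \<subseteq> Y \<Longrightarrow> E \<subseteq> E' \<Longrightarrow> (a,b) \<in> (adj E X)\<^sup>* \<Longrightarrow> (a,b) \<in> (adj E' Y)\<^sup>*"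
  using rtrancl_mono[OF adj_mono] by blast

lemma path_rtr:
  assumes "is_path X {e\<in>E. e \<subseteq> X} p"
  shows "j < length p \<Longrightarrow> (hd p, p!j) \<in> (adj E X)\<^sup>*"
proof (induction j)
  case 0
  then show ?case using assms by (simp add: is_path_def hd_conv_nth)
next
  case (Suc j)
  then have "(hd p, p!j) \<in> (adj E X)\<^sup>*" by simp
  moreover have "{p!j, p!Suc j} \<in> E" "{p!j, p!Suc j} \<subseteq> X"
    using assms Suc.prems unfolding is_path_def by blast+
  then have "(p!j, p!Suc j) \<in> adj E X" by (simp add: adj_def)
  ultimately show ?case by (rule rtrancl_into_rtrancl)
qed

lemma rtr_path:
  assumes "(u,v) \<in> (adj E X)\<^sup>*" "u \<in> X"
  shows "\<exists>p. is_path X {e\<in>E. e \<subseteq> X} p \<and> hd p = u \<and> last p = v"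
  using assms
proof (induction rule: rtrancl_induct)
  case base
  show ?case by (rule exI[of _ "[u]"]) (simp add: is_path_def base)
next
  case (step a b)
  from step obtain p where p: "is_path X {e\<in>E. e \<subseteq> X} p" "hd p = u" "last p = a" by blast
  have ab: "{a,b} \<in> E" "a \<in> X" "b \<in> X" using step(2) by (auto simp: adj_def)
  have pne: "p \<noteq> []" using p by (simp add: is_path_def)
  show ?case
  proof (cases "b \<in> set p")
    case True
    then obtain i where i: "i < length p" "p!i = b" by (auto simp: in_set_conv_nth)
    define q where "q = take (Suc i) p"
    have lq: "length q = Suc i" using i by (simp add: q_def)
    have "is_path X {e\<in>E. e \<subseteq> X} q"
      unfolding is_path_def
    proof (intro conjI allI impI)
      show "q \<noteq> []" using lq by auto
      show "distinct q" using p unfolding q_def is_path_def by simp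
      show "set q \<subseteq> X" using p set_take_subset[of "Suc i" p] unfolding q_def is_path_def by blast
      fix j assume j: "Suc j < length q"
      then have "q ! j = p ! j" "q ! Suc j = p ! Suc j" "Suc j < length p"
        using lq i unfolding q_def by auto
      then show "{q ! j, q ! Suc j} \<in> {e \<in> E. e \<subseteq> X}" using p unfolding is_path_def by simp
    qed
    moreover have "hd q = u" using p pne by (simp add: q_def hd_conv_nth)
    moreover have "last q = b" using lq i unfolding q_def by (subst last_conv_nth) auto
    ultimately show ?thesis by blast
  next
    case False
    define q where "q = p @ [b]"
    have "is_path X {e\<in>E. e \<subseteq> X} q"
      unfolding is_path_def q_def
    proof (intro conjI allI impI)
      show "distinct (p @ [b])" using p False by (simp add: is_path_def)
      show "set (p @ [b]) \<subseteq> X" using p ab by (simp add: is_path_def)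
      fix j assume j: "Suc j < length (p @ [b])"
      show "{(p @ [b]) ! j, (p @ [b]) ! Suc j} \<in> {e \<in> E. e \<subseteq> X}"
      proof (cases "Suc j < length p")
        case True
        then show ?thesis using p by (simp add: is_path_def nth_append)
      next
        case False
        then have "j = length p - 1" using j by simp
        then have "(p @ [b]) ! j = a" "(p @ [b]) ! Suc j = b"
          using pne p(3) by (auto simp: nth_append last_conv_nth)
        then show ?thesis using ab by simp
      qed
    qed simp
    moreover have "hd q = u" using p pne by (simp add: q_def)
    moreover have "last q = b" by (simp add: q_def)
    ultimately show ?thesis by blast
  qed
qed

lemma ic_conn: "induced_connected V E X \<longleftrightarrow> conn V E X"
proof
  assume h: "induced_connected V E X"
  have h1: "X \<noteq> {}" "X \<subseteq> V" using h unfolding induced_connected_def by blast+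
  have h2: "\<exists>p. is_path X {e\<in>E. e \<subseteq> X} p \<and> hd p = u \<and> last p = v" if "u \<in> X" "v \<in> X" for u v
    using h that unfolding induced_connected_def by blast
  show "conn V E X" unfolding conn_def
  proof (intro conjI ballI h1)
    fix u v assume "u \<in> X" "v \<in> X"
    then obtain p where p: "is_path X {e\<in>E. e \<subseteq> X} p" "hd p = u" "last p = v"
      using h2 by blast
    then have pne: "p \<noteq> []" unfolding is_path_def by blast
    then have "length p - 1 < length p" by simp
    from path_rtr[OF p(1) this] have "(hd p, p ! (length p - 1)) \<in> (adj E X)\<^sup>*" .
    moreover have "p ! (length p - 1) = v" using p(3) pne by (simp add: last_conv_nth)
    ultimately show "(u,v) \<in> (adj E X)\<^sup>*" using p(2) by simp
  qed
next
  assume h: "conn V E X"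
  have h1: "X \<noteq> {}" "X \<subseteq> V" using h unfolding conn_def by blast+
  show "induced_connected V E X" unfolding induced_connected_def
  proof (intro conjI ballI h1)
    fix u v assume uv: "u \<in> X" "v \<in> X"
    then have "(u,v) \<in> (adj E X)\<^sup>*" using h unfolding conn_def by blast
    from rtr_path[OF this uv(1)]
    show "\<exists>p. is_path X {e \<in> E. e \<subseteq> X} p \<and> hd p = u \<and> last p = v" .
  qed
qed




definition wfe :: "'a set set \<Rightarrow> bool" where
  "wfe E \<longleftrightarrow> (\<forall>e\<in>E. \<exists>a b. a \<noteq> b \<and> e = {a,b})"

lemma cross_iff: "a \<noteq> b \<Longrightarrow> card ({a,b} \<inter> S) = 1 \<longleftrightarrow> (a \<in> S \<longleftrightarrow> b \<notin> S)"
  by (cases "a \<in> S"; cases "b \<in> S") auto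

lemma wfe_Diff: "wfe E \<Longrightarrow> wfe (E - F)"
  by (auto simp: wfe_def)

lemma submod:
  assumes "finite E" "wfe E"
  shows "boundary_deg E (X \<union> Y) + boundary_deg E (X \<inter> Y) \<le> boundary_deg E X + boundary_deg E Y"
proof -
  let ?P = "\<lambda>S. {e\<in>E. card (e \<inter> S) = 1}"
  have 1: "?P (X \<union> Y) \<union> ?P (X \<inter> Y) \<subseteq> ?P X \<union> ?P Y"
  proof
    fix e assume "e \<in> ?P (X \<union> Y) \<union> ?P (X \<inter> Y)"
    then have e: "e \<in> E" and c: "card (e \<inter> (X \<union> Y)) = 1 \<or> card (e \<inter> (X \<inter> Y)) = 1" by auto
    from e assms(2) obtain a b where ab: "a \<noteq> b" "e = {a,b}" unfolding wfe_def by blast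
    have "card (e \<inter> X) = 1 \<or> card (e \<inter> Y) = 1" using c unfolding ab cross_iff[OF ab(1)] by auto
    then show "e \<in> ?P X \<union> ?P Y" using e by auto
  qed
  have 2: "?P (X \<union> Y) \<inter> ?P (X \<inter> Y) \<subseteq> ?P X \<inter> ?P Y"
  proof
    fix e assume "e \<in> ?P (X \<union> Y) \<inter> ?P (X \<inter> Y)"
    then have e: "e \<in> E" and c: "card (e \<inter> (X \<union> Y)) = 1" "card (e \<inter> (X \<inter> Y)) = 1" by auto
    from e assms(2) obtain a b where ab: "a \<noteq> b" "e = {a,b}" unfolding wfe_def by blast
    have "card (e \<inter> X) = 1 \<and> card (e \<inter> Y) = 1" using c unfolding ab cross_iff[OF ab(1)] by auto
    then show "e \<in> ?P X \<inter> ?P Y" using e by auto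
  qed
  have f: "finite (?P S)" for S using assms(1) by simp
  have "card (?P (X \<union> Y)) + card (?P (X \<inter> Y)) = card (?P (X \<union> Y) \<union> ?P (X \<inter> Y)) + card (?P (X \<union> Y) \<inter> ?P (X \<inter> Y))"
    by (rule card_Un_Int[OF f f])
  also have "\<dots> \<le> card (?P X \<union> ?P Y) + card (?P X \<inter> ?P Y)"
    using card_mono[OF _ 1] card_mono[OF _ 2] f by (meson add_mono finite_Int finite_UnI)
  also have "\<dots> = card (?P X) + card (?P Y)"
    by (rule card_Un_Int[OF f f, symmetric])
  finally show ?thesis unfolding boundary_deg_def .
qed




lemma bd_minus_le:
  assumes "finite E"
  shows "boundary_deg E X \<le> boundary_deg (E - {e}) X + 1"
proof -
  have "{e'\<in>E. card (e' \<inter> X) = 1} \<subseteq> insert e {e'\<in>E - {e}. card (e' \<inter> X) = 1}" by auto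
  then have "card {e'\<in>E. card (e' \<inter> X) = 1} \<le> card (insert e {e'\<in>E - {e}. card (e' \<inter> X) = 1})"
    using assms by (intro card_mono) auto
  also have "\<dots> \<le> card {e'\<in>E - {e}. card (e' \<inter> X) = 1} + 1"
    using assms by (simp add: card_insert_if)
  finally show ?thesis unfolding boundary_deg_def .
qed

lemma bd_minus_eq:
  assumes "finite E" "e \<in> E" "card (e \<inter> X) = 1"
  shows "boundary_deg E X = boundary_deg (E - {e}) X + 1"
proof -
  have "{e'\<in>E. card (e' \<inter> X) = 1} = insert e {e'\<in>E - {e}. card (e' \<inter> X) = 1}" using assms by auto
  then show ?thesis using assms unfolding boundary_deg_def by simp
qed

lemma bd_pos:
  assumes "finite E" "e \<in> E" "card (e \<inter> X) = 1"
  shows "boundary_deg E X \<ge> 1"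
  using bd_minus_eq[OF assms] by simp



definition compo :: "'a set set \<Rightarrow> 'a set \<Rightarrow> 'a set \<Rightarrow> 'a set" where
  "compo E X A = {v. \<exists>a\<in>A. (a,v) \<in> (adj E X)\<^sup>*}"

lemma compoI: "a \<in> A \<Longrightarrow> (a,v) \<in> (adj E X)\<^sup>* \<Longrightarrow> v \<in> compo E X A"
  unfolding compo_def by auto

lemma comp_props:
  assumes cA: "conn V E A" and AX: "A \<subseteq> X" and XV: "X \<subseteq> V" and fE: "finite E" and w: "wfe E"
  shows "A \<subseteq> compo E X A" "compo E X A \<subseteq> X" "conn V E (compo E X A)"
    "boundary_deg E (compo E X A) \<le> boundary_deg E X"
proof -
  let ?C = "compo E X A"
  show AC: "A \<subseteq> ?C" unfolding compo_def using rtrancl.rtrancl_refl by fast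
  show CX: "?C \<subseteq> X"
  proof
    fix v assume "v \<in> ?C"
    then obtain a where "a \<in> A" "(a,v) \<in> (adj E X)\<^sup>*" unfolding compo_def by blast
    then show "v \<in> X" by (meson AX rtr_in subsetD)
  qed
  have key: "(a,v) \<in> (adj E X)\<^sup>* \<Longrightarrow> a \<in> A \<Longrightarrow> (a,v) \<in> (adj E ?C)\<^sup>*" for a v
  proof (induction rule: rtrancl_induct)
    case base then show ?case by simp
  next
    case (step w z)
    have az: "(a,z) \<in> (adj E X)\<^sup>*" using step(1,2) by (rule rtrancl_into_rtrancl)
    have "w \<in> ?C" by (rule compoI[OF step.prems step(1)])
    moreover have "z \<in> ?C" by (rule compoI[OF step.prems az])
    ultimately have "(w,z) \<in> adj E ?C" using step(2) by (auto simp: adj_def)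
    moreover have "(a,w) \<in> (adj E ?C)\<^sup>*" using step.IH[OF step.prems] .
    ultimately show ?case by (meson rtrancl.rtrancl_into_rtrancl)
  qed
  show "conn V E ?C" unfolding conn_def
  proof (intro conjI ballI)
    have "A \<noteq> {}" using cA by (simp add: conn_def)
    then show "?C \<noteq> {}" using AC by auto
    show "?C \<subseteq> V" using CX XV by blast
    fix u v assume uC: "u \<in> ?C" and vC: "v \<in> ?C"
    from uC obtain a where a: "a \<in> A" "(a,u) \<in> (adj E X)\<^sup>*" unfolding compo_def by auto
    from vC obtain b where b: "b \<in> A" "(b,v) \<in> (adj E X)\<^sup>*" unfolding compo_def by auto
    have 1: "(a,u) \<in> (adj E ?C)\<^sup>*" "(b,v) \<in> (adj E ?C)\<^sup>*" using key[OF a(2) a(1)] key[OF b(2) b(1)] by auto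
    have "(a,b) \<in> (adj E A)\<^sup>*" using cA a(1) b(1) unfolding conn_def by simp
    then have 2: "(a,b) \<in> (adj E ?C)\<^sup>*" using rtr_mono[OF AC order_refl] by simp
    have "(u,a) \<in> (adj E ?C)\<^sup>*" using rtr_sym[OF 1(1)] .
    then show "(u,v) \<in> (adj E ?C)\<^sup>*" using rtrancl_trans[OF rtrancl_trans[OF _ 2] 1(2)] by simp
  qed
  have "{e\<in>E. card (e \<inter> ?C) = 1} \<subseteq> {e\<in>E. card (e \<inter> X) = 1}"
  proof
    fix e assume e: "e \<in> {e\<in>E. card (e \<inter> ?C) = 1}"
    then obtain a b where ab: "a \<noteq> b" "e = {a,b}" using w unfolding wfe_def by blast
    have eE: "e \<in> E" using e by simp
    have "card ({a,b} \<inter> ?C) = 1" using e ab(2) by simp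
    then have c: "a \<in> ?C \<longleftrightarrow> b \<notin> ?C" using cross_iff[OF ab(1)] by blast
    have "a \<in> X \<longleftrightarrow> b \<notin> X"
    proof
      assume aX: "a \<in> X"
      show "b \<notin> X"
      proof
        assume bX: "b \<in> X"
        have ab1: "(a,b) \<in> adj E X" using eE ab aX bX by (simp add: adj_def)
        then have ba1: "(b,a) \<in> adj E X" by (rule adj_sym)
        show False
        proof (cases "a \<in> ?C")
          case True
          then obtain a0 where "a0 \<in> A" "(a0,a) \<in> (adj E X)\<^sup>*" unfolding compo_def by blast
          then have "b \<in> ?C" using compoI rtrancl_into_rtrancl[OF _ ab1] by metis
          then show False using True c by blast
        next
          case False
          then have "b \<in> ?C" using c by blast
          then obtain a0 where "a0 \<in> A" "(a0,b) \<in> (adj E X)\<^sup>*" unfolding compo_def by blast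
          then have "a \<in> ?C" using compoI rtrancl_into_rtrancl[OF _ ba1] by metis
          then show False using False by blast
        qed
      qed
    next
      assume "b \<notin> X"
      then have "b \<notin> ?C" using CX by blast
      then show "a \<in> X" using c CX by blast
    qed
    then have "card ({a,b} \<inter> X) = 1" using cross_iff[OF ab(1)] by blast
    then show "e \<in> {e\<in>E. card (e \<inter> X) = 1}" using eE ab(2) by simp
  qed
  then show "boundary_deg E ?C \<le> boundary_deg E X"
    unfolding boundary_deg_def using fE by (intro card_mono) auto
qed




lemma conn_rtr: "conn V E X \<Longrightarrow> u \<in> X \<Longrightarrow> v \<in> X \<Longrightarrow> (u,v) \<in> (adj E X)\<^sup>*"
  unfolding conn_def by simp

lemma conn_Un:
  assumes "conn V E C" "conn V E R" "C \<inter> R \<noteq> {}"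
  shows "conn V E (C \<union> R)"
  unfolding conn_def
proof (intro conjI ballI)
  show "C \<union> R \<noteq> {}" "C \<union> R \<subseteq> V" using assms unfolding conn_def by auto
  obtain w where w: "w \<in> C" "w \<in> R" using assms(3) by blast
  have W: "(a,w) \<in> (adj E (C \<union> R))\<^sup>*" if "a \<in> C \<union> R" for a
  proof (cases "a \<in> C")
    case True
    show ?thesis using rtr_mono[OF Un_upper1 order_refl conn_rtr[OF assms(1) True w(1)]] .
  next
    case False
    then have "a \<in> R" using that by simp
    show ?thesis using rtr_mono[OF Un_upper2 order_refl conn_rtr[OF assms(2) \<open>a \<in> R\<close> w(2)]] .
  qed
  fix u v assume "u \<in> C \<union> R" "v \<in> C \<union> R"
  then show "(u,v) \<in> (adj E (C \<union> R))\<^sup>*"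
    using rtrancl_trans[OF W[of u] rtr_sym[OF W[of v]]] by simp
qed

lemma conn_insert:
  assumes "conn V E R" "u \<in> R" "{u,v} \<in> E" "v \<in> V"
  shows "conn V E (insert v R)"
proof -
  have "conn V E {u,v}" unfolding conn_def
  proof (intro conjI ballI)
    show "{u,v} \<noteq> {}" by simp
    show "{u,v} \<subseteq> V" using assms unfolding conn_def by auto
    have e: "(u,v) \<in> adj E {u,v}" using assms(3) by (simp add: adj_def)
    have e2: "(v,u) \<in> adj E {u,v}" by (rule adj_sym[OF e])
    fix a b assume "a \<in> {u,v}" "b \<in> {u,v}"
    then show "(a,b) \<in> (adj E {u,v})\<^sup>*" using e e2 by auto
  qed
  moreover have "{u,v} \<inter> R \<noteq> {}" using assms(2) by auto
  ultimately have "conn V E ({u,v} \<union> R)" using conn_Un assms(1) by metis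
  moreover have "{u,v} \<union> R = insert v R" using assms(2) by auto
  ultimately show ?thesis by simp
qed

lemma conn_cross:
  assumes "conn V E X" "a \<in> R" "a \<in> X" "b \<in> X" "b \<notin> R"
  shows "\<exists>e\<in>E. card (e \<inter> R) = 1"
proof -
  have "(a,b) \<in> (adj E X)\<^sup>*" using conn_rtr[OF assms(1,3,4)] .
  then show ?thesis using assms(5)
  proof (induction rule: rtrancl_induct)
    case base then show ?case using assms(2) by simp
  next
    case (step w z)
    show ?case
    proof (cases "w \<in> R")
      case True
      have "{w,z} \<in> E" using step(2) by (simp add: adj_def)
      moreover have "w \<noteq> z" using True step(4) by blast
      moreover have "card ({w,z} \<inter> R) = 1" using cross_iff[OF \<open>w \<noteq> z\<close>] True step(4) by simp
      ultimately show ?thesis by blast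
    next
      case False
      then show ?thesis using step(3) by simp
    qed
  qed
qed




lemma important_conn:
  "important V E x y X \<longleftrightarrow> x \<in> X \<and> y \<notin> X \<and> conn V E X \<and>
     \<not> (\<exists>X'. X \<subset> X' \<and> y \<notin> X' \<and> conn V E X' \<and> boundary_deg E X' \<le> boundary_deg E X)"
  unfolding important_def ic_conn by (rule refl)

lemma conn_V: "conn V E X \<Longrightarrow> X \<subseteq> V" by (simp add: conn_def)

lemma conn_mono_E:
  assumes "conn V E' X" "E' \<subseteq> E" shows "conn V E X"
  unfolding conn_def
proof (intro conjI ballI)
  show "X \<noteq> {}" "X \<subseteq> V" using assms(1) unfolding conn_def by simp_all
  fix u v assume "u \<in> X" "v \<in> X"
  then show "(u,v) \<in> (adj E X)\<^sup>*" using rtr_mono[OF order_refl assms(2) conn_rtr[OF assms(1)]] by simp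
qed

lemma adj_remove:
  assumes "\<not> e \<subseteq> X" shows "adj (E - {e}) X = adj E X"
proof -
  have "{a,b} \<noteq> e" if "a \<in> X" "b \<in> X" for a b using assms that by auto
  then show ?thesis unfolding adj_def by blast
qed

lemma conn_remove:
  assumes "conn V E X" "\<not> e \<subseteq> X" shows "conn V (E - {e}) X"
  using assms unfolding conn_def adj_remove[OF assms(2)] by simp

definition lam :: "'a set \<Rightarrow> 'a set set \<Rightarrow> 'a \<Rightarrow> 'a set \<Rightarrow> nat" where
  "lam V E y A = Min ((\<lambda>X. boundary_deg E X) ` {X. A \<subseteq> X \<and> X \<subseteq> V \<and> y \<notin> X})"

lemma lam_fin: "finite V \<Longrightarrow> finite {X. A \<subseteq> X \<and> X \<subseteq> V \<and> y \<notin> X}"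
  by (rule finite_subset[of _ "Pow V"]) auto

lemma lam_le:
  assumes "finite V" "A \<subseteq> X" "X \<subseteq> V" "y \<notin> X"
  shows "lam V E y A \<le> boundary_deg E X"
proof -
  have "X \<in> {X. A \<subseteq> X \<and> X \<subseteq> V \<and> y \<notin> X}" using assms by simp
  then have "boundary_deg E X \<in> (\<lambda>X. boundary_deg E X) ` {X. A \<subseteq> X \<and> X \<subseteq> V \<and> y \<notin> X}"
    by (rule imageI)
  then show ?thesis unfolding lam_def using finite_imageI[OF lam_fin[OF assms(1)]] by (rule Min_le[rotated])
qed

lemma lam_ex:
  assumes "finite V" "A \<subseteq> V" "y \<notin> A"
  shows "\<exists>X. A \<subseteq> X \<and> X \<subseteq> V \<and> y \<notin> X \<and> boundary_deg E X = lam V E y A"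
proof -
  have "A \<in> {X. A \<subseteq> X \<and> X \<subseteq> V \<and> y \<notin> X}" using assms by simp
  then have ne: "(\<lambda>X. boundary_deg E X) ` {X. A \<subseteq> X \<and> X \<subseteq> V \<and> y \<notin> X} \<noteq> {}" by blast
  have "lam V E y A \<in> (\<lambda>X. boundary_deg E X) ` {X. A \<subseteq> X \<and> X \<subseteq> V \<and> y \<notin> X}"
    unfolding lam_def using finite_imageI[OF lam_fin[OF assms(1)]] ne by (rule Min_in)
  then obtain X where "X \<in> {X. A \<subseteq> X \<and> X \<subseteq> V \<and> y \<notin> X}" "lam V E y A = boundary_deg E X"
    by (rule imageE)
  then show ?thesis by auto
qed




definition ISet :: "'a set \<Rightarrow> 'a set set \<Rightarrow> 'a \<Rightarrow> 'a \<Rightarrow> 'a set \<Rightarrow> nat \<Rightarrow> 'a set set" where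
  "ISet V E x y A p = {X. A \<subseteq> X \<and> important V E x y X \<and> boundary_deg E X \<le> p}"

lemma impD:
  assumes "important V E x y X"
  shows "x \<in> X" "y \<notin> X" "conn V E X" "X \<subseteq> V"
    "\<And>X'. X \<subset> X' \<Longrightarrow> y \<notin> X' \<Longrightarrow> conn V E X' \<Longrightarrow> boundary_deg E X < boundary_deg E X'"
proof -
  have h: "x \<in> X" "y \<notin> X" "conn V E X"
    "\<not> (\<exists>X'. X \<subset> X' \<and> y \<notin> X' \<and> conn V E X' \<and> boundary_deg E X' \<le> boundary_deg E X)"
    using assms unfolding important_conn by blast+
  show "x \<in> X" "y \<notin> X" "conn V E X" using h by blast+
  show "X \<subseteq> V" using conn_V[OF h(3)] .
  fix X' assume "X \<subset> X'" "y \<notin> X'" "conn V E X'"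
  then show "boundary_deg E X < boundary_deg E X'" using h(4) not_le by blast
qed

lemma ISet_fin: "finite V \<Longrightarrow> finite (ISet V E x y A p)"
  by (rule finite_subset[of _ "Pow V"]) (auto simp: ISet_def dest: impD(4))

lemma count_aux:
  assumes "n = 2*p - lam V E y A" "finite V" "finite E" "wfe E" "\<forall>e\<in>E. e \<subseteq> V"
    "conn V E A" "x \<in> A" "y \<notin> A"
  shows "card (ISet V E x y A p) * 2 ^ lam V E y A \<le> 4 ^ p"
  using assms
proof (induction n arbitrary: E A p rule: less_induct)
  case (less n E A p)
  note fV = less.prems(2) and fE = less.prems(3) and wE = less.prems(4) and EV = less.prems(5)
    and cA = less.prems(6) and xA = less.prems(7) and yA = less.prems(8)
  define l where "l = lam V E y A"
  define S where "S = ISet V E x y A p"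
  have AV: "A \<subseteq> V" using conn_V[OF cA] .
  have Ane: "A \<noteq> {}" using xA by auto
  have finS: "finite S" unfolding S_def using ISet_fin[OF fV] .
  have Sd: "l \<le> boundary_deg E X" if "X \<in> S" for X
  proof -
    have "important V E x y X" "A \<subseteq> X" using that unfolding S_def ISet_def by auto
    then show ?thesis unfolding l_def using lam_le[OF fV \<open>A \<subseteq> X\<close> impD(4) impD(2)] by blast
  qed
  show ?case
  proof (cases "p < l")
    case True
    have "S = {}"
    proof (rule ccontr)
      assume "S \<noteq> {}"
      then obtain X where "X \<in> S" by blast
      then have "l \<le> boundary_deg E X" "boundary_deg E X \<le> p" using Sd unfolding S_def ISet_def by auto
      then show False using True by simp
    qed
    then show ?thesis unfolding S_def[symmetric] l_def[symmetric] by simp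
  next
    case False
    then have lp: "l \<le> p" by simp
    define MM where "MM = {C. A \<subseteq> C \<and> C \<subseteq> V \<and> y \<notin> C \<and> conn V E C \<and> boundary_deg E C = l}"
    have "MM \<subseteq> Pow V" unfolding MM_def by blast
    then have finMM: "finite MM" using fV by (simp add: finite_subset)
    obtain M where M: "A \<subseteq> M" "M \<subseteq> V" "y \<notin> M" "boundary_deg E M = l"
      using lam_ex[OF fV AV yA, where E=E] unfolding l_def[symmetric] by (elim exE conjE) simp
    have "compo E M A \<in> MM"
    proof -
      note cp = comp_props[OF cA M(1) M(2) fE wE]
      have yC: "y \<notin> compo E M A" using cp(2) M(3) by blast
      have CV: "compo E M A \<subseteq> V" using cp(2) M(2) by (rule order_trans)
      have "l \<le> boundary_deg E (compo E M A)" unfolding l_def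
        by (rule lam_le[OF fV cp(1) CV yC])
      then have "boundary_deg E (compo E M A) = l" using cp(4) M(4) by linarith
      then show ?thesis unfolding MM_def using cp(1,3) CV yC by blast
    qed
    then have MMne: "MM \<noteq> {}" by blast
    define m where "m = Max (card ` MM)"
    have "m \<in> card ` MM" unfolding m_def using finMM MMne by (intro Max_in) auto
    then obtain R where R: "R \<in> MM" "card R = m" by blast
    have Rmax: "card C \<le> card R" if "C \<in> MM" for C
      unfolding R(2) m_def using finMM that by (intro Max_ge) auto
    have RMM: "A \<subseteq> R" "R \<subseteq> V" "y \<notin> R" "conn V E R" "boundary_deg E R = l" using R(1) unfolding MM_def by auto
    have Rsub: "C \<subseteq> R" if "C \<in> MM" for C
    proof -
      have C: "A \<subseteq> C" "C \<subseteq> V" "y \<notin> C" "conn V E C" "boundary_deg E C = l" using that unfolding MM_def by auto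
      have "l \<le> boundary_deg E (C \<inter> R)" unfolding l_def by (rule lam_le[OF fV]) (use C RMM in auto)
      moreover have "l \<le> boundary_deg E (C \<union> R)" unfolding l_def by (rule lam_le[OF fV]) (use C RMM in auto)
      moreover note submod[OF fE wE, of C R]
      ultimately have "boundary_deg E (C \<union> R) = l" using C RMM by linarith
      moreover have "C \<inter> R \<noteq> {}" using C(1) RMM(1) Ane by blast
      ultimately have "C \<union> R \<in> MM" unfolding MM_def using C RMM conn_Un[OF C(4) RMM(4)] by auto
      then have "card (C \<union> R) \<le> card R" by (rule Rmax)
      moreover have "finite (C \<union> R)" using C(2) RMM(2) fV finite_subset by auto
      ultimately have "C \<union> R = R" using card_subset_eq[of "C \<union> R" R] by (metis Un_upper2 card_seteq)
      then show ?thesis by blast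
    qed
    have SR: "R \<subseteq> X" if "X \<in> S" for X
    proof (rule ccontr)
      assume nRX: "\<not> R \<subseteq> X"
      have X: "A \<subseteq> X" "important V E x y X" using that unfolding S_def ISet_def by auto
      note iX = impD[OF X(2)]
      have "l \<le> boundary_deg E (X \<inter> R)" unfolding l_def by (rule lam_le[OF fV]) (use X(1) RMM iX in auto)
      with submod[OF fE wE, of X R] RMM(5) have le: "boundary_deg E (X \<union> R) \<le> boundary_deg E X" by linarith
      have "X \<subset> X \<union> R" using nRX by blast
      moreover have "y \<notin> X \<union> R" using iX RMM by blast
      moreover have "conn V E (X \<union> R)" using conn_Un[OF iX(3) RMM(4)] X(1) RMM(1) Ane by blast
      ultimately have "boundary_deg E X < boundary_deg E (X \<union> R)" by (rule iX(5))
      then show False using le by simp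
    qed
    show ?thesis
    proof (cases "boundary_deg E R = 0")
      case True
      have "S \<subseteq> {R}"
      proof
        fix X assume XS: "X \<in> S"
        have X: "A \<subseteq> X" "important V E x y X" using XS unfolding S_def ISet_def by auto
        note iX = impD[OF X(2)]
        have "X = R"
        proof (rule ccontr)
          assume "X \<noteq> R"
          then obtain b where b: "b \<in> X" "b \<notin> R" using SR[OF XS] by blast
          have "\<exists>e\<in>E. card (e \<inter> R) = 1" using conn_cross[OF iX(3) _ _ b] xA X(1) RMM(1) by blast
          then obtain e where "e \<in> E" "card (e \<inter> R) = 1" by blast
          from bd_pos[OF fE this] True show False by simp
        qed
        then show "X \<in> {R}" by simp
      qed
      then have "card S \<le> 1" using card_mono[of "{R}" S] by simp
      moreover have "l = 0" using True RMM(5) by simp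
      moreover have "(1::nat) \<le> 4 ^ p" by simp
      ultimately have "card S * 2 ^ l \<le> 4 ^ p" by (metis le_trans mult.right_neutral power_0)
      then show ?thesis unfolding S_def l_def .
    next
      case False
      then have "{e\<in>E. card (e \<inter> R) = 1} \<noteq> {}" unfolding boundary_deg_def by (metis card.empty)
      then obtain e where eE: "e \<in> E" and eR: "card (e \<inter> R) = 1" by blast
      obtain a b where ab: "a \<noteq> b" "e = {a,b}" using wE eE unfolding wfe_def by blast
      have "\<exists>u v. e = {u,v} \<and> u \<noteq> v \<and> u \<in> R \<and> v \<notin> R"
        using eR unfolding ab(2) cross_iff[OF ab(1)] using ab(1) by (metis insert_commute)
      then obtain u v where uv: "e = {u,v}" "u \<noteq> v" "u \<in> R" "v \<notin> R" by blast
      have vV: "v \<in> V" using EV eE uv(1) by auto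
      have vA: "v \<notin> A" using uv(4) RMM(1) by blast
      define S1 where "S1 = {X\<in>S. card (e \<inter> X) = 1}"
      define S2 where "S2 = {X\<in>S. card (e \<inter> X) \<noteq> 1}"
      have SU: "S = S1 \<union> S2" unfolding S1_def S2_def by auto
      have fS1: "finite S1" "finite S2" using finS unfolding S1_def S2_def by auto
      have B1: "2 * card S1 * 2 ^ l \<le> 4 ^ p"
      proof (cases "S1 = {}")
        case True then show ?thesis by simp
      next
        case False
        then obtain X0 where "X0 \<in> S1" by blast
        then have "1 \<le> boundary_deg E X0" "boundary_deg E X0 \<le> p" using bd_pos[OF fE eE] unfolding S1_def S_def ISet_def by auto
        then have p1: "1 \<le> p" by simp
        define E' where "E' = E - {e}"
        define l' where "l' = lam V E' y A"
        have fE': "finite E'" "wfe E'" "\<forall>e\<in>E'. e \<subseteq> V" using fE wE EV wfe_Diff unfolding E'_def by auto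
        have "\<not> e \<subseteq> A" using vA uv(1) by blast
        then have cA': "conn V E' A" unfolding E'_def by (rule conn_remove[OF cA])
        obtain M' where M': "A \<subseteq> M'" "M' \<subseteq> V" "y \<notin> M'" "boundary_deg E' M' = l'"
          using lam_ex[OF fV AV yA, where E=E'] unfolding l'_def[symmetric] by (elim exE conjE) simp
        have "l \<le> boundary_deg E M'" unfolding l_def using lam_le[OF fV M'(1-3)] .
        moreover have "boundary_deg E M' \<le> boundary_deg E' M' + 1" unfolding E'_def by (rule bd_minus_le[OF fE])
        ultimately have ll': "l \<le> l' + 1" using M'(4) by simp
        have lt: "2*(p-1) - l' < n" using less.prems(1) ll' lp p1 unfolding l_def by linarith
        have IH: "card (ISet V E' x y A (p-1)) * 2 ^ l' \<le> 4 ^ (p-1)"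
          using less.IH[OF lt[unfolded l'_def] refl fV fE' cA' xA yA] unfolding l'_def .
        have sub: "S1 \<subseteq> ISet V E' x y A (p-1)"
        proof
          fix X assume XS1: "X \<in> S1"
          have X: "A \<subseteq> X" "important V E x y X" "boundary_deg E X \<le> p" "card (e \<inter> X) = 1"
            using XS1 unfolding S1_def S_def ISet_def by auto
          note iX = impD[OF X(2)]
          have neX: "\<not> e \<subseteq> X"
          proof
            assume "e \<subseteq> X" then have "e \<inter> X = e" by blast
            then show False using X(4) uv(1,2) by simp
          qed
          have deq: "boundary_deg E X = boundary_deg E' X + 1" unfolding E'_def by (rule bd_minus_eq[OF fE eE X(4)])
          have "important V E' x y X" unfolding important_conn
          proof (intro conjI)
            show "x \<in> X" "y \<notin> X" using iX by auto
            show "conn V E' X" unfolding E'_def by (rule conn_remove[OF iX(3) neX])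
            show "\<not> (\<exists>X'. X \<subset> X' \<and> y \<notin> X' \<and> conn V E' X' \<and> boundary_deg E' X' \<le> boundary_deg E' X)"
            proof
            assume "\<exists>X'. X \<subset> X' \<and> y \<notin> X' \<and> conn V E' X' \<and> boundary_deg E' X' \<le> boundary_deg E' X"
            then obtain X' where X': "X \<subset> X'" "y \<notin> X'" "conn V E' X'" "boundary_deg E' X' \<le> boundary_deg E' X" by blast
            have "conn V E X'" using conn_mono_E[OF X'(3)] unfolding E'_def by blast
            then have "boundary_deg E X < boundary_deg E X'" using iX(5)[OF X'(1,2)] by blast
            moreover have "boundary_deg E X' \<le> boundary_deg E' X' + 1" unfolding E'_def by (rule bd_minus_le[OF fE])
            ultimately show False using X'(4) deq by linarith
            qed
          qed
          then show "X \<in> ISet V E' x y A (p-1)" unfolding ISet_def using X(1,3) deq by auto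
        qed
        have "card S1 \<le> card (ISet V E' x y A (p-1))" using card_mono[OF ISet_fin[OF fV] sub] .
        then have "2 * card S1 * 2 ^ l \<le> 2 * card (ISet V E' x y A (p-1)) * 2 ^ (l' + 1)"
          using ll' by (intro mult_le_mono mult_le_mono2 power_increasing) auto
        also have "\<dots> = 4 * (card (ISet V E' x y A (p-1)) * 2 ^ l')" by simp
        also have "\<dots> \<le> 4 * 4 ^ (p-1)" using IH by simp
        also have "\<dots> = 4 ^ p" using p1 by (metis Suc_diff_le diff_Suc_1 power_Suc)
        finally show ?thesis .
      qed
      have B2: "2 * card S2 * 2 ^ l \<le> 4 ^ p"
      proof (cases "S2 = {}")
        case True then show ?thesis by simp
      next
        case False
        have vX: "v \<in> X" if "X \<in> S2" for X
        proof -
          have "card ({u,v} \<inter> X) \<noteq> 1" using that uv(1) unfolding S2_def by simp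
          moreover have "u \<in> X" using SR uv(3) that unfolding S2_def by blast
          ultimately show ?thesis using cross_iff[OF uv(2)] by blast
        qed
        have vy: "v \<noteq> y"
        proof
          assume "v = y"
          from False obtain X where "X \<in> S2" by blast
          then have "v \<in> X" "important V E x y X" using vX unfolding S2_def S_def ISet_def by auto
          then show False using impD(2)[of V E x y X] \<open>v = y\<close> by blast
        qed
        define A' where "A' = insert v R"
        define l' where "l' = lam V E y A'"
        have cA': "conn V E A'" unfolding A'_def using conn_insert[OF RMM(4) uv(3) _ vV] eE uv(1) by simp
        have xA': "x \<in> A'" "y \<notin> A'" using xA RMM vy unfolding A'_def by auto
        have A'V: "A' \<subseteq> V" using conn_V[OF cA'] .
        have ll': "l < l'"
        proof -
          obtain M' where M': "A' \<subseteq> M'" "M' \<subseteq> V" "y \<notin> M'" "boundary_deg E M' = l'"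
            using lam_ex[OF fV A'V xA'(2), where E=E] unfolding l'_def[symmetric] by (elim exE conjE) simp
          have AA': "A \<subseteq> A'" using RMM(1) unfolding A'_def by blast
          have "l \<le> l'" unfolding l_def using lam_le[OF fV _ M'(2,3)] M'(1,4) AA' by auto
          moreover have "l \<noteq> l'"
          proof
            assume ll: "l = l'"
            note cp = comp_props[OF cA' M'(1) M'(2) fE wE]
            have "y \<notin> compo E M' A'" using cp(2) M'(3) by blast
            moreover have "l \<le> boundary_deg E (compo E M' A')" unfolding l_def
              using lam_le[OF fV _ _ \<open>y \<notin> compo E M' A'\<close>] cp(1,2) M'(2) AA' by auto
            ultimately have "compo E M' A' \<in> MM" unfolding MM_def using cp M' ll AA' by auto
            then have "v \<in> R" using Rsub cp(1) unfolding A'_def by blast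
            then show False using uv(4) by simp
          qed
          ultimately show ?thesis by simp
        qed
        show ?thesis
        proof (cases "p < l'")
          case True
          from False obtain X where XS2: "X \<in> S2" by blast
          then have "A' \<subseteq> X" "important V E x y X" "boundary_deg E X \<le> p"
            using vX SR unfolding A'_def S2_def S_def ISet_def by auto
          then have "l' \<le> boundary_deg E X" unfolding l'_def using lam_le[OF fV] impD[of V E x y X] by blast
          then show ?thesis using True \<open>boundary_deg E X \<le> p\<close> by simp
        next
          case False
          have lt: "2*p - l' < n" using less.prems(1) ll' False unfolding l_def by linarith
          have IH: "card (ISet V E x y A' p) * 2 ^ l' \<le> 4 ^ p"
            using less.IH[OF lt[unfolded l'_def] refl fV fE wE EV cA' xA'] unfolding l'_def .
          have sub: "S2 \<subseteq> ISet V E x y A' p"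
            using vX SR unfolding A'_def S2_def S_def ISet_def by auto
          have "card S2 \<le> card (ISet V E x y A' p)" using card_mono[OF ISet_fin[OF fV] sub] .
          then have "2 * card S2 * 2 ^ l = card S2 * 2 ^ (l+1)" by simp
          also have "\<dots> \<le> card (ISet V E x y A' p) * 2 ^ l'"
            using \<open>card S2 \<le> _\<close> ll' by (intro mult_le_mono power_increasing) auto
          finally show ?thesis using IH by (rule order.trans)
        qed
      qed
      have "card S \<le> card S1 + card S2" unfolding SU by (rule card_Un_le)
      then have e1: "card S * 2 ^ l \<le> card S1 * 2 ^ l + card S2 * 2 ^ l"
        using mult_le_mono1[of "card S" "card S1 + card S2" "2^l"] by (simp add: add_mult_distrib)
      have B1': "2 * (card S1 * 2 ^ l) \<le> 4 ^ p" using B1 by (simp add: mult.assoc)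
      have B2': "2 * (card S2 * 2 ^ l) \<le> 4 ^ p" using B2 by (simp add: mult.assoc)
      have "card S * 2 ^ l \<le> 4 ^ p" using e1 B1' B2' by linarith
      then show ?thesis unfolding S_def l_def .
    qed
  qed
qed

lemma count:
  assumes "finite V" "finite E" "wfe E" "\<forall>e\<in>E. e \<subseteq> V" "x \<in> V" "y \<noteq> x"
  shows "card {X. important V E x y X \<and> boundary_deg E X \<le> p} \<le> 4 ^ p"
proof -
  have c: "conn V E {x}" unfolding conn_def using assms(5) by simp
  have yx: "y \<notin> {x}" using assms(6) by simp
  have 1: "card (ISet V E x y {x} p) * 2 ^ lam V E y {x} \<le> 4 ^ p"
    using count_aux[OF refl assms(1-4) c insertI1 yx] .
  have "card (ISet V E x y {x} p) * 1 \<le> card (ISet V E x y {x} p) * 2 ^ lam V E y {x}"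
    by (intro mult_le_mono2) simp
  then have 2: "card (ISet V E x y {x} p) \<le> 4 ^ p" using 1 by linarith
  have "ISet V E x y {x} p = {X. important V E x y X \<and> boundary_deg E X \<le> p}"
    unfolding ISet_def using impD(1) by auto
  with 2 show ?thesis by simp
qed




lemma card_UN_bound:
  assumes "finite I" "\<And>i. i \<in> I \<Longrightarrow> card (B i) \<le> K"
  shows "card (\<Union>i\<in>I. B i) \<le> card I * K"
proof -
  have "card (\<Union>i\<in>I. B i) \<le> (\<Sum>i\<in>I. card (B i))" by (rule card_UN_le[OF assms(1)])
  also have "\<dots> \<le> of_nat (card I) * K" by (rule sum_bounded_above) (use assms(2) in auto)
  finally show ?thesis by simp
qed

theorem lemma7:
  fixes V :: "'a set" and E :: "'a set set" and Y T1 T2 :: "'a set" and ys :: 'a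
    and k t :: nat
  assumes "simple_graph V E"
    and "bipartite V E"
    and "T1 \<subseteq> V" and "T2 \<subseteq> V" and "T1 \<inter> T2 = {}"
    and "card T1 + card T2 \<le> t"
    and "Y \<subseteq> V" and "well_connected V E Y"
    and "card Y \<ge> 2 * (4 * k^2) * t * 4 ^ (4 * k^2) + 2"
    and "ys \<notin> V"
  shows "\<exists>u v. {u, v} \<in> E \<and> u \<notin> Zset V E Y ys T1 T2 k \<and> v \<notin> Zset V E Y ys T1 T2 k"
proof (rule ccontr)
  assume contra: "\<not> (\<exists>u v. {u, v} \<in> E \<and> u \<notin> Zset V E Y ys T1 T2 k \<and> v \<notin> Zset V E Y ys T1 T2 k)"
  define p where "p = 4 * k^2"
  define Vs where "Vs = star_V V ys"
  define Es where "Es = star_E E Y ys"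
  define T where "T = T1 \<union> T2"
  have fV: "finite V" and EV: "\<forall>e\<in>E. e \<subseteq> V \<and> card e = 2" using assms(1) unfolding simple_graph_def by auto
  have fT: "finite T" using fV assms(3,4) finite_subset unfolding T_def by blast
  have cT: "card T \<le> t" using card_Un_le[of T1 T2] assms(6) unfolding T_def by linarith
  have fY: "finite Y" using fV assms(7) finite_subset by blast
  have fE: "finite E" using fV EV by (meson Pow_iff finite_Pow_iff rev_finite_subset subsetI)
  have Es_eq: "Es = E \<union> (\<lambda>y. {ys,y}) ` Y" unfolding Es_def star_E_def by auto
  have fVs: "finite Vs" using fV unfolding Vs_def star_V_def by simp
  have fEs: "finite Es" using fE fY unfolding Es_eq by simp
  have wEs: "wfe Es" unfolding wfe_def Es_eq
  proof
    fix e assume "e \<in> E \<union> (\<lambda>y. {ys,y}) ` Y"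
    then show "\<exists>a b. a \<noteq> b \<and> e = {a,b}"
    proof
      assume "e \<in> E" then show ?thesis using EV card_2_iff by metis
    next
      assume "e \<in> (\<lambda>y. {ys,y}) ` Y"
      then obtain y where "y \<in> Y" "e = {ys,y}" by blast
      moreover then have "ys \<noteq> y" using assms(7,10) by blast
      ultimately show ?thesis by blast
    qed
  qed
  have EsV: "\<forall>e\<in>Es. e \<subseteq> Vs" using EV assms(7) unfolding Es_eq Vs_def star_V_def by auto
  define II where "II = {X. \<exists>x\<in>T. important Vs Es x ys X \<and> boundary_deg Es X \<le> p}"
  have Z: "Zset V E Y ys T1 T2 k = \<Union>II"
    unfolding Zset_def II_def Vs_def Es_def T_def p_def by simp
  have II_eq: "II = (\<Union>x\<in>T. {X. important Vs Es x ys X \<and> boundary_deg Es X \<le> p})"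
    unfolding II_def by blast
  have cII: "card II \<le> card T * 4 ^ p" unfolding II_eq
  proof (rule card_UN_bound[OF fT])
    fix x assume "x \<in> T"
    then have "x \<in> Vs" "ys \<noteq> x" using assms(3,4,10) unfolding T_def Vs_def star_V_def by auto
    then show "card {X. important Vs Es x ys X \<and> boundary_deg Es X \<le> p} \<le> 4 ^ p"
      using count[OF fVs fEs wEs EsV] by blast
  qed
  have fII: "finite II" by (rule finite_subset[of _ "Pow Vs"]) (auto simp: II_def fVs dest: impD(4))
  define F where "F = (\<Union>X\<in>II. {e\<in>Es. card (e \<inter> X) = 1})"
  have cF: "card F \<le> card II * p" unfolding F_def
    by (rule card_UN_bound[OF fII]) (auto simp: II_def boundary_deg_def)
  have fF: "finite F" by (rule finite_subset[OF _ fEs]) (auto simp: F_def)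
  have cF2: "card F \<le> t * 4 ^ p * p"
  proof -
    have "card II * p \<le> t * 4 ^ p * p" using cII cT by (intro mult_le_mono1) (meson le_trans mult_le_mono1)
    then show ?thesis using cF by linarith
  qed
  have cY: "card Y \<ge> 2 * (t * 4 ^ p * p) + 2" using assms(9) unfolding p_def by (simp add: algebra_simps)
  define ZZ where "ZZ = \<Union>II"
  define W where "W = Y - ZZ"
  define z where "z = card (Y \<inter> ZZ)"
  define m where "m = card W div 2"
  have fW: "finite W" using fY unfolding W_def by simp
  have cW: "card W + z = card Y" unfolding W_def z_def using fY
    by (metis Diff_Diff_Int card_Diff_subset_Int Int_lower1 card_mono finite_Int le_add_diff_inverse2 card_Diff_subset inf_commute)
  obtain X1 where X1: "X1 \<subseteq> W" "card X1 = m" "finite X1"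
    using obtain_subset_with_card_n[of m W] unfolding m_def by auto
  have "m \<le> card (W - X1)" using X1 fW card_Diff_subset[OF X1(3) X1(1)] unfolding m_def by simp
  then obtain X2 where X2: "X2 \<subseteq> W - X1" "card X2 = m" "finite X2"
    using obtain_subset_with_card_n[of m "W - X1"] by auto
  have X12: "X1 \<subseteq> Y" "X2 \<subseteq> Y" using X1 X2 unfolding W_def by auto
  have X1c: "2 * card X1 \<le> card Y" using X1(2) cW unfolding m_def by simp
  have "\<exists>P. finite P \<and> card P = card X1 \<and>
             (\<forall>p\<in>P. is_path V E p \<and> hd p \<in> X1 \<and> last p \<in> X2) \<and>
             (\<forall>p\<in>P. \<forall>q\<in>P. p \<noteq> q \<longrightarrow> set p \<inter> set q = {})"
    by (rule assms(8)[unfolded well_connected_def, rule_format]) (use X12 X1c X1(2) X2(2) in simp)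
  then obtain P where P: "finite P" "card P = m"
    "\<forall>p\<in>P. is_path V E p \<and> hd p \<in> X1 \<and> last p \<in> X2"
    "\<forall>p\<in>P. \<forall>q\<in>P. p \<noteq> q \<longrightarrow> set p \<inter> set q = {}"
    using X1(2) by (elim exE conjE) simp
  define f where "f = (\<lambda>q::'a list. {q!0, q!1})"
  define g where "g = (\<lambda>y. {ys, y})"
  have fP: "f q \<in> F \<and> f q \<subseteq> V \<and> q!0 \<in> set q \<and> q!1 \<in> set q" if qP: "q \<in> P" for q
  proof -
    have q: "is_path V E q" "hd q \<in> X1" "last q \<in> X2" using P(3) qP by auto
    have qne: "q \<noteq> []" using q(1) unfolding is_path_def by simp
    have "hd q \<noteq> last q"
    proof
      assume "hd q = last q"
      then have "hd q \<in> X2" using q(3) by simp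
      then show False using q(2) X2(1) by auto
    qed
    have "length q \<noteq> 1"
    proof
      assume "length q = 1"
      then have "last q = q!0" using qne by (simp add: last_conv_nth)
      moreover have "hd q = q!0" using qne by (simp add: hd_conv_nth)
      ultimately show False using \<open>hd q \<noteq> last q\<close> by simp
    qed
    then have l2: "Suc 0 < length q" using qne by (cases q) auto
    have "\<forall>i. Suc i < length q \<longrightarrow> {q!i, q!Suc i} \<in> E" using q(1) unfolding is_path_def by blast
    then have eE: "{q!0, q!1} \<in> E" using l2 by simp
    have "distinct q" using q(1) unfolding is_path_def by blast
    then have d01: "q!0 \<noteq> q!1" using l2 qne nth_eq_iff_index_eq[of q 0 1] by simp
    have "q!0 \<in> W" using q(2) X1(1) qne by (simp add: hd_conv_nth subset_iff)
    then have q0: "q!0 \<notin> ZZ" unfolding W_def by blast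
    have "q!0 \<in> Zset V E Y ys T1 T2 k \<or> q!1 \<in> Zset V E Y ys T1 T2 k" using contra eE by blast
    then have "q!1 \<in> ZZ" using q0 unfolding Z ZZ_def by blast
    then obtain X where X: "X \<in> II" "q!1 \<in> X" unfolding ZZ_def by blast
    have "q!0 \<notin> X" using q0 X(1) unfolding ZZ_def by blast
    then have "card ({q!0, q!1} \<inter> X) = 1" using cross_iff[OF d01] X(2) by simp
    moreover have "{q!0, q!1} \<in> Es" using eE unfolding Es_eq by simp
    ultimately have "f q \<in> F" unfolding F_def f_def using X(1) by blast
    moreover have "f q \<subseteq> V" using eE EV unfolding f_def by blast
    moreover have "0 < length q" using qne by simp
    then have "q!0 \<in> set q" by (rule nth_mem)
    moreover have "q!1 \<in> set q" using l2 by (simp add: nth_mem)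
    ultimately show ?thesis by simp
  qed
  have gY: "g y \<in> F \<and> ys \<in> g y" if yY: "y \<in> Y \<inter> ZZ" for y
  proof -
    obtain X where X: "X \<in> II" "y \<in> X" using yY unfolding ZZ_def by blast
    from X(1) obtain x where "important Vs Es x ys X" unfolding II_def by blast
    then have "ys \<notin> X" by (rule impD(2))
    moreover have "ys \<noteq> y" using yY assms(7,10) by blast
    ultimately have "card ({ys, y} \<inter> X) = 1" using cross_iff X(2) by simp
    moreover have "{ys,y} \<in> Es" using yY unfolding Es_eq by blast
    ultimately show ?thesis unfolding F_def g_def using X(1) by blast
  qed
  have injf: "inj_on f P"
  proof
    fix q r assume qr: "q \<in> P" "r \<in> P" "f q = f r"
    show "q = r"
    proof (rule ccontr)
      assume "q \<noteq> r"
      then have "set q \<inter> set r = {}" using P(4) qr by blast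
      moreover have "q!0 \<in> f r" using qr(3) unfolding f_def by auto
      then have "q!0 \<in> set r" using fP[OF qr(2)] unfolding f_def by auto
      ultimately show False using fP[OF qr(1)] by blast
    qed
  qed
  have injg: "inj_on g (Y \<inter> ZZ)"
  proof
    fix a b assume ab: "a \<in> Y \<inter> ZZ" "b \<in> Y \<inter> ZZ" "g a = g b"
    have "a \<noteq> ys" "b \<noteq> ys" using ab assms(7,10) by auto
    then show "a = b" using ab(3) unfolding g_def by (auto simp: doubleton_eq_iff)
  qed
  have disj: "f ` P \<inter> g ` (Y \<inter> ZZ) = {}"
  proof -
    have "ys \<notin> f q" if "q \<in> P" for q using fP[OF that] assms(10) by blast
    then show ?thesis using gY by blast
  qed
  have sub: "f ` P \<union> g ` (Y \<inter> ZZ) \<subseteq> F" using fP gY by blast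
  have "card (f ` P \<union> g ` (Y \<inter> ZZ)) = card (f ` P) + card (g ` (Y \<inter> ZZ))"
    by (rule card_Un_disjoint) (use P(1) fY disj in auto)
  also have "\<dots> = m + z" using card_image[OF injf] card_image[OF injg] P(2) unfolding z_def by simp
  finally have "m + z \<le> card F" using card_mono[OF fF sub] by simp
  then have "m + z \<le> t * 4 ^ p * p" using cF2 by linarith
  moreover have "card W \<le> 2 * m + 1" unfolding m_def by simp
  ultimately show False using cY cW by linarith
qed


end
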